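(* Let $\mathcal K\subseteq\mathbb R^d$ be closed and convex, $\alpha,\epsilon,L>0$, and let $\ell_1,\dots,\ell_T:\mathcal K\to\mathbb R$ be $(\alpha,\epsilon)$-nearly strongly convex with subgradients bounded in norm by $L$, revealed online together with scales $g_1,\dots,g_T\in[0,1]$ (each possibly chosen adaptively). Run online gradient descent: pick any $x_1\in\mathcal K$, and set $x_{t+1}=\Pi_{\mathcal K}\big(x_t-\eta_tg_t\nabla\ell_t(x_t)\big)$ with $\eta_t=R'(G_t)$, $G_t=\sum_{s\le t}g_s$, where $R'(z)=\frac2\alpha$ for $z\in[0,1]$, $R'(z)=\frac{2}{\alpha z}$ for $z\in\big[1,(\frac{\sqrt2L}{\alpha\epsilon})^2\big]$, and $R'(z)=\frac{\sqrt2\,\epsilon}{L\sqrt z}$ for $z\ge(\frac{\sqrt2L}{\alpha\epsilon})^2$. Then for every $x^*\in\mathcal K$, $$\sum_{t=1}^Tg_t\big(\ell_t(x_t)-\ell_t(x^* )\big)\le2\sqrt2\,\epsilon L\sqrt{G_T}+\frac{L^2}{\alpha}\big(\log(G_T+1)+1\big).$$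
   Context: A continuous function $h$ on a convex set $\mathcal K$ is $(\alpha,\epsilon)$-nearly strongly convex if for all $x,y\in\mathcal K$ and every subgradient $\nabla h(x)$, $h(y)-h(x)-\nabla h(x)^\top(y-x)\ge\frac\alpha2\big(\|y-x\|-\epsilon\big)_+^2$, where $(z)_+=\max(z,0)$. $\Pi_{\mathcal K}$ is Euclidean projection onto $\mathcal K$; $\nabla\ell_t(x_t)$ is any subgradient. *)

theory Defs
  imports "HOL-Analysis.Analysis"
begin

definition subgradient_at :: "'a::euclidean_space set \<Rightarrow> ('a \<Rightarrow> real) \<Rightarrow> 'a \<Rightarrow> 'a \<Rightarrow> bool" where
  "subgradient_at K h x v \<longleftrightarrow> (\<forall>y\<in>K. h y \<ge> h x + v \<bullet> (y - x))"

definition nearly_strongly_convex :: "real \<Rightarrow> real \<Rightarrow> 'a::euclidean_space set \<Rightarrow> ('a \<Rightarrow> real) \<Rightarrow> bool" where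
  "nearly_strongly_convex \<alpha> \<epsilon> K h \<longleftrightarrow> continuous_on K h \<and>
     (\<forall>x\<in>K. \<forall>y\<in>K. \<forall>v. subgradient_at K h x v \<longrightarrow>
        h y - h x - v \<bullet> (y - x) \<ge> \<alpha> / 2 * (max (norm (y - x) - \<epsilon>) 0)\<^sup>2)"

definition Rprime :: "real \<Rightarrow> real \<Rightarrow> real \<Rightarrow> real \<Rightarrow> real" where
  "Rprime \<alpha> \<epsilon> L z =
     (if z \<le> 1 then 2 / \<alpha>
      else if z \<le> (sqrt 2 * L / (\<alpha> * \<epsilon>))\<^sup>2 then 2 / (\<alpha> * z)
      else sqrt 2 * \<epsilon> / (L * sqrt z))"

end

theory Submission
  imports Defs
begin


lemma S1A: fixes s p :: real
  assumes "0 \<le> p" "p \<le> s" "s \<le> 1"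
  shows "(1 - s^2) * ((s^2 - p^2) + s^2 - p^2) \<le> 2 * (s - p)"
proof -
  have h1: "s * (1 - s) \<le> 1/4" using zero_le_power2[of "s - 1/2"] by (simp add: algebra_simps power2_eq_square)
  have h2: "0 \<le> s * (1 - s)" using assms by simp
  have "s * (1 - s) * (1 + s) \<le> 1/4 * 2"
    using assms h1 h2 by (intro mult_mono) auto
  hence "(1 - s^2) * (s + p) \<le> 1"
  proof -
    assume a: "s * (1 - s) * (1 + s) \<le> 1/4 * 2"
    have "(1 - s^2) * (s + p) \<le> (1 - s^2) * (2 * s)"
      using assms by (intro mult_left_mono) (auto simp: power_le_one)
    also have "\<dots> = 2 * (s * (1 - s) * (1 + s))" by (simp add: algebra_simps power2_eq_square)
    finally show ?thesis using a by linarith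
  qed
  hence "(1 - s^2) * (s + p) * (2*(s-p)) \<le> 1 * (2*(s-p))"
    using assms by (intro mult_right_mono) auto
  thus ?thesis by (simp add: algebra_simps power2_eq_square)
qed

lemma S1B: fixes a s p :: real
  assumes "0 < a" "a \<le> p" "p \<le> s" "s \<le> 1"
  shows "(1 - a * s) * ((s^2 - p^2) + a * s - a * p) \<le> 2 * (s - p)"
proof -
  have as1: "a * s \<le> 1" using assms by (metis dual_order.trans mult_le_one less_imp_le)
  have "(1 - a * s) * (s + p + a) \<le> (1 - a * s) * (2 * s + a)"
    using assms as1 by (intro mult_left_mono) auto
  also have "\<dots> = 2 - ((1 - s) * (2 - a * (1 + s)) + a * s^2 + a^2 * s)"
    by (simp add: algebra_simps power2_eq_square)
  also have "\<dots> \<le> 2"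
  proof -
    have "a * (1 + s) \<le> 1 * 2" using assms by (intro mult_mono) auto
    hence "0 \<le> (1 - s) * (2 - a * (1 + s))" using assms by simp
    moreover have "0 \<le> a * s^2 + a^2 * s" using assms by simp
    ultimately show ?thesis by linarith
  qed
  finally have "(1 - a * s) * (s + p + a) \<le> 2" .
  hence "(1 - a * s) * (s + p + a) * (s - p) \<le> 2 * (s - p)"
    using assms by (intro mult_right_mono) auto
  thus ?thesis by (simp add: algebra_simps power2_eq_square)
qed

lemma S1C: fixes a s p :: real
  assumes "0 \<le> p" "p \<le> a" "a \<le> s" "s \<le> 1"
  shows "(1 - a * s) * ((s^2 - p^2) + a * s - p^2) \<le> 2 * (s - p)"
proof -
  have as1: "a * s \<le> 1" using assms by (metis dual_order.trans mult_le_one order.trans)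
  have eq: "(s^2 - p^2) + a * s - p^2 = (s - p) * (s + p + a) + p * (a - p)"
    by (simp add: algebra_simps power2_eq_square)
  have "p * (a - p) \<le> p * (s - p)" using assms by (intro mult_left_mono) auto
  hence "(s^2 - p^2) + a * s - p^2 \<le> (s - p) * (s + 3 * a)"
  proof -
    assume h: "p * (a - p) \<le> p * (s - p)"
    have "(s - p) * (s + 2 * p + a) \<le> (s - p) * (s + 3 * a)"
      using assms by (intro mult_left_mono) auto
    thus ?thesis unfolding eq using h by (simp add: algebra_simps)
  qed
  hence "(1 - a * s) * ((s^2 - p^2) + a * s - p^2) \<le> (1 - a * s) * ((s - p) * (s + 3 * a))"
    using as1 by (intro mult_left_mono) auto
  also have "\<dots> = (s - p) * ((1 - a * s) * (s + 3 * a))" by simp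
  also have "\<dots> \<le> (s - p) * 2"
  proof (intro mult_left_mono)
    have id: "2 - (1 - a * s) * (s + 3 * a) = (1 - s) + (a + 1) * (2 * a - 1)^2 + a * (s^2 - a^2) + 3 * a^2 * (s - a)"
      by (simp add: algebra_simps power2_eq_square power3_eq_cube)
    have "a^2 \<le> s^2" using assms by (intro power_mono) auto
    hence "0 \<le> a * (s^2 - a^2)" using assms by simp
    moreover have "0 \<le> 3 * a^2 * (s - a)" using assms by simp
    moreover have "0 \<le> (a + 1) * (2 * a - 1)^2" using assms by simp
    ultimately show "(1 - a * s) * (s + 3 * a) \<le> 2" using id assms by linarith
  qed (use assms in auto)
  finally show ?thesis by simp
qed

definition ogd_mm :: "real \<Rightarrow> real \<Rightarrow> real" where "ogd_mm a z = min z (a * sqrt z)"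

lemma ogd_mm_props:
  fixes a u v :: real
  assumes "0 < a" "0 \<le> u" "u \<le> v"
  shows "0 \<le> ogd_mm a u" "ogd_mm a u \<le> ogd_mm a v" "ogd_mm a v - ogd_mm a u \<le> v - u" "ogd_mm a v \<le> v"
proof -
  define p where "p = sqrt u"
  define s where "s = sqrt v"
  have p0: "0 \<le> p" and ps: "p \<le> s" using assms by (auto simp: p_def s_def)
  have u: "u = p^2" and v: "v = s^2" using assms by (auto simp: p_def s_def)
  have mu: "ogd_mm a u = min (p^2) (a * p)" and mv: "ogd_mm a v = min (s^2) (a * s)"
    using assms by (simp_all add: ogd_mm_def p_def s_def)
  show "0 \<le> ogd_mm a u" using mu p0 assms by simp
  show "ogd_mm a v \<le> v" using mv v by simp
  have "a * p \<le> a * s" using ps assms by (intro mult_left_mono) auto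
  moreover have "p^2 \<le> s^2" using ps p0 by (intro power_mono) auto
  ultimately show "ogd_mm a u \<le> ogd_mm a v" using mu mv by (simp add: min_def)
  show "ogd_mm a v - ogd_mm a u \<le> v - u"
  proof (cases "s \<le> a")
    case True
    have "p * p \<le> a * p" using True ps p0 by (intro mult_right_mono) auto
    hence "ogd_mm a u = p^2" using mu by (simp add: power2_eq_square)
    moreover have "s * s \<le> a * s" using True ps p0 by (intro mult_right_mono) auto
    hence "ogd_mm a v = s^2" using mv by (simp add: power2_eq_square)
    ultimately show ?thesis using u v by simp
  next
    case False
    hence "a * s \<le> s * s" using p0 ps by (intro mult_right_mono) auto
    hence mv': "ogd_mm a v = a * s" using mv by (simp add: power2_eq_square)
    show ?thesis
    proof (cases "a \<le> p")
      case True
      hence "a * p \<le> p * p" using p0 by (intro mult_right_mono) auto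
      hence "ogd_mm a u = a * p" using mu by (simp add: power2_eq_square)
      moreover have "a * (s - p) \<le> (s + p) * (s - p)" using True ps p0 by (intro mult_right_mono) auto
      ultimately show ?thesis using mv' u v by (simp add: algebra_simps power2_eq_square)
    next
      case False
      hence "p * p \<le> a * p" using p0 by (intro mult_right_mono) auto
      hence "ogd_mm a u = p^2" using mu by (simp add: power2_eq_square)
      moreover have "a * s \<le> s * s" using \<open>a * s \<le> s * s\<close> .
      ultimately show ?thesis using mv' u v by (simp add: algebra_simps power2_eq_square)
    qed
  qed
qed

lemma S1:
  fixes a u v :: real
  assumes "0 < a" "0 \<le> u" "u \<le> v" "v \<le> 1"
  shows "(1 - ogd_mm a v) * ((v - u) + ogd_mm a v - ogd_mm a u) \<le> 2 * (sqrt v - sqrt u)"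
proof -
  define p where "p = sqrt u"
  define s where "s = sqrt v"
  have p0: "0 \<le> p" and ps: "p \<le> s" and s1: "s \<le> 1" using assms by (auto simp: p_def s_def)
  have u: "u = p^2" and v: "v = s^2" using assms by (auto simp: p_def s_def)
  have vu: "v - u = s^2 - p^2" using u v by simp
  have sq: "sqrt v - sqrt u = s - p" by (simp add: p_def s_def)
  have mu: "ogd_mm a u = min (p^2) (a * p)" and mv: "ogd_mm a v = min (s^2) (a * s)"
    using assms by (simp_all add: ogd_mm_def p_def s_def)
  show ?thesis
  proof (cases "s \<le> a")
    case True
    have "p * p \<le> a * p" using True ps p0 by (intro mult_right_mono) auto
    hence mu': "ogd_mm a u = p^2" using mu by (simp add: power2_eq_square)
    have "s * s \<le> a * s" using True ps p0 by (intro mult_right_mono) auto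
    hence mv': "ogd_mm a v = s^2" using mv by (simp add: power2_eq_square)
    show ?thesis unfolding vu sq mu' mv' using S1A[OF p0 ps s1] by simp
  next
    case False
    hence "a * s \<le> s * s" using p0 ps by (intro mult_right_mono) auto
    hence mv': "ogd_mm a v = a * s" using mv by (simp add: power2_eq_square)
    show ?thesis
    proof (cases "a \<le> p")
      case True
      hence "a * p \<le> p * p" using p0 by (intro mult_right_mono) auto
      hence mu': "ogd_mm a u = a * p" using mu by (simp add: power2_eq_square)
      show ?thesis unfolding vu sq mu' mv' using S1B[OF assms(1) True ps s1] by simp
    next
      case False
      hence "p * p \<le> a * p" using p0 by (intro mult_right_mono) auto
      hence mu': "ogd_mm a u = p^2" using mu by (simp add: power2_eq_square)
      have "p \<le> a" "a \<le> s" using False \<open>\<not> s \<le> a\<close> by auto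
      thus ?thesis unfolding vu sq mu' mv' using S1C[OF p0 _ _ s1] by simp
    qed
  qed
qed

lemma Pbound:
  fixes \<alpha> \<epsilon> L g lam D r :: real
  assumes "0 < \<alpha>" "0 < \<epsilon>" "0 < L" "lam \<le> 1" "0 \<le> D" "D \<le> \<alpha> * g / 4" "0 \<le> r"
  shows "D * r^2 + (1 - lam) * g * L * r - \<alpha> * g / 2 * (max (r - \<epsilon>) 0)^2
     \<le> 2 * \<epsilon>^2 * D + (1 - lam) * L * \<epsilon> * (g + 4 * D / \<alpha>) + (1 - lam)^2 * L^2 * (g + 4 * D / \<alpha>) / (2 * \<alpha>)"
proof -
  define m where "m = (1 - lam) * L / \<alpha>"
  define M where "M = max (r - \<epsilon>) 0"
  have m0: "0 \<le> m" using assms by (simp add: m_def)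
  have E0: "m * r - M^2 / 2 \<le> m * \<epsilon> + m^2 / 2"
  proof (cases "r \<le> \<epsilon>")
    case True
    hence "m * r \<le> m * \<epsilon>" using m0 by (intro mult_left_mono) auto
    moreover have "0 \<le> m^2/2" by simp
    moreover have "M = 0" using True by (simp add: M_def)
    ultimately show ?thesis by (simp only: power2_eq_square mult_zero_left)
  next
    case False
    hence M: "M = r - \<epsilon>" by (simp add: M_def)
    have "0 \<le> (M - m)^2" by simp
    moreover have "m * r - M^2 / 2 - (m * \<epsilon> + m^2 / 2) = - ((M - m)^2) / 2"
      unfolding M by (simp add: algebra_simps power2_eq_square field_simps)
    ultimately show ?thesis by linarith
  qed
  have E1: "r^2 / 4 + m * r - M^2 / 2 \<le> \<epsilon>^2 / 2 + 2 * \<epsilon> * m + m^2"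
  proof (cases "r \<le> \<epsilon>")
    case True
    hence "m * r \<le> m * \<epsilon>" using m0 by (intro mult_left_mono) auto
    moreover have "r^2 \<le> \<epsilon>^2" using True assms by (intro power_mono) auto
    moreover have "0 \<le> \<epsilon> * m" using m0 assms by simp
    moreover have "0 \<le> m^2" by simp
    moreover have "M^2 = 0" using True by (simp add: M_def)
    moreover have "0 \<le> \<epsilon>^2" by simp
    moreover have "m * \<epsilon> = \<epsilon> * m" by simp
    ultimately show ?thesis by linarith
  next
    case False
    hence M: "M = r - \<epsilon>" by (simp add: M_def)
    have r: "r = \<epsilon> + M" using M by simp
    have "0 \<le> (\<epsilon>/2 - M/2 + m)^2" by simp
    moreover have "\<epsilon>^2/2 + 2 * \<epsilon> * m + m^2 - (r^2 / 4 + m * r - M^2 / 2) = (\<epsilon>/2 - M/2 + m)^2"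
      unfolding r by (simp add: power2_eq_square field_simps)
    ultimately show ?thesis by linarith
  qed
  have w0: "0 \<le> \<alpha> * g - 4 * D" using assms by simp
  have A: "(\<alpha> * g - 4 * D) * (m * r - M^2 / 2) \<le> (\<alpha> * g - 4 * D) * (m * \<epsilon> + m^2 / 2)"
    using E0 w0 by (intro mult_left_mono)
  have B: "(4 * D) * (r^2 / 4 + m * r - M^2 / 2) \<le> (4 * D) * (\<epsilon>^2 / 2 + 2 * \<epsilon> * m + m^2)"
    using E1 assms by (intro mult_left_mono) auto
  have am: "(1 - lam) * L = \<alpha> * m" using assms by (simp add: m_def)
  have lhs0: "(\<alpha> * g - 4 * D) * (m * r - M^2 / 2) + (4 * D) * (r^2 / 4 + m * r - M^2 / 2)
     = D * r^2 + (\<alpha> * m) * g * r - \<alpha> * g / 2 * M^2"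
    by (simp add: algebra_simps power2_eq_square)
  have lhs: "D * r^2 + (1 - lam) * g * L * r - \<alpha> * g / 2 * M^2
     = (\<alpha> * g - 4 * D) * (m * r - M^2 / 2) + (4 * D) * (r^2 / 4 + m * r - M^2 / 2)"
    unfolding lhs0 am[symmetric] by (simp add: algebra_simps)
  have r1: "(1 - lam) * L * \<epsilon> * (g + 4 * D / \<alpha>) = (\<alpha> * m) * \<epsilon> * g + 4 * m * \<epsilon> * D"
    unfolding am using assms by (simp add: algebra_simps)
  have r2: "(1 - lam)^2 * L^2 * (g + 4 * D / \<alpha>) / (2 * \<alpha>) = \<alpha> * m^2 * g / 2 + 2 * m^2 * D"
  proof -
    have "(1 - lam)^2 * L^2 = (\<alpha> * m)^2" unfolding am[symmetric] by (simp add: power_mult_distrib)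
    hence "(1 - lam)^2 * L^2 * (g + 4 * D / \<alpha>) / (2 * \<alpha>) = (\<alpha> * m)^2 * (g + 4 * D / \<alpha>) / (2 * \<alpha>)" by simp
    also have "\<dots> = \<alpha> * m^2 * g / 2 + 2 * m^2 * D" using assms
      by (simp add: power2_eq_square add_divide_distrib diff_divide_distrib ring_distribs)
    finally show ?thesis .
  qed
  have rhs0: "(\<alpha> * g - 4 * D) * (m * \<epsilon> + m^2 / 2) + (4 * D) * (\<epsilon>^2 / 2 + 2 * \<epsilon> * m + m^2)
     = 2 * \<epsilon>^2 * D + ((\<alpha> * m) * \<epsilon> * g + 4 * m * \<epsilon> * D) + (\<alpha> * m^2 * g / 2 + 2 * m^2 * D)"
    by (simp add: algebra_simps power2_eq_square)
  have rhs: "2 * \<epsilon>^2 * D + (1 - lam) * L * \<epsilon> * (g + 4 * D / \<alpha>) + (1 - lam)^2 * L^2 * (g + 4 * D / \<alpha>) / (2 * \<alpha>)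
     = (\<alpha> * g - 4 * D) * (m * \<epsilon> + m^2 / 2) + (4 * D) * (\<epsilon>^2 / 2 + 2 * \<epsilon> * m + m^2)"
    unfolding rhs0 r1 r2 ..
  show ?thesis using A B lhs rhs by (simp add: M_def)
qed

definition ogd_psi :: "real \<Rightarrow> real \<Rightarrow> real \<Rightarrow> real \<Rightarrow> real" where
  "ogd_psi \<alpha> \<epsilon> L z = \<alpha> / 4 * ogd_mm (sqrt 2 * L / (\<alpha> * \<epsilon>)) z"

definition ogd_kap :: "real \<Rightarrow> real" where "ogd_kap z = (if z \<le> 1 then z else 1 + ln z)"

definition ogd_FF :: "real \<Rightarrow> real \<Rightarrow> real \<Rightarrow> real \<Rightarrow> real" where
  "ogd_FF \<alpha> \<epsilon> L z = 2 * \<epsilon>^2 * ogd_psi \<alpha> \<epsilon> L z + 3 / sqrt 2 * \<epsilon> * L * sqrt z + L^2 / \<alpha> * ogd_kap z"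

lemma ogd_kap_mono: assumes "0 \<le> u" "u \<le> v" shows "ogd_kap u \<le> ogd_kap v"
proof -
  have a: "ln u \<le> ln v" if "\<not> u \<le> 1" using that assms by simp
  have b: "0 \<le> ln v" if "\<not> v \<le> 1" using that by simp
  show ?thesis
  proof (cases "v \<le> 1")
    case True thus ?thesis using assms by (simp add: ogd_kap_def)
  next
    case False
    have kv: "ogd_kap v = 1 + ln v" using False by (simp add: ogd_kap_def)
    show ?thesis
    proof (cases "u \<le> 1")
      case True
      hence "ogd_kap u = u" by (simp add: ogd_kap_def)
      thus ?thesis using kv b[OF False] True by linarith
    next
      case F2: False
      hence "ogd_kap u = 1 + ln u" by (simp add: ogd_kap_def)
      thus ?thesis using kv a[OF F2] by linarith
    qed
  qed
qed

lemma ogd_kap_reg2: assumes "0 \<le> u" "u \<le> v" "v - u \<le> 1" "1 < v"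
  shows "(v - u)^2 / v \<le> ogd_kap v - ogd_kap u"
proof -
  have lnv: "1 - 1 / v \<le> ln v"
    using ln_le_minus_one[of "1/v"] assms by (simp add: ln_div)
  show ?thesis
  proof (cases "u \<le> 1")
    case True
    have "(v - u) * (v - u) \<le> 1 * (v - u)" using assms by (intro mult_right_mono) auto
    hence "(v - u)^2 \<le> (v - u)" by (simp add: power2_eq_square)
    also have "\<dots> \<le> (1 - u) * v + (v - 1)"
    proof -
      have "0 \<le> (1 - u) * (v - 1)" using True assms by simp
      moreover have "(1 - u) * v + (v - 1) - (v - u) = (1 - u) * (v - 1)" by (simp add: algebra_simps)
      ultimately show ?thesis by linarith
    qed
    finally have "(v - u)^2 / v \<le> ((1 - u) * v + (v - 1)) / v" using assms by (simp add: divide_right_mono)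
    also have "\<dots> = 1 - u + (1 - 1 / v)" using assms by (simp add: field_simps)
    finally show ?thesis using True assms lnv by (simp add: ogd_kap_def)
  next
    case False
    have lnuv: "1 - u / v \<le> ln v - ln u"
      using ln_le_minus_one[of "u/v"] assms False by (simp add: ln_div)
    have "(v - u) * (v - u) \<le> 1 * (v - u)" using assms by (intro mult_right_mono) auto
    hence "(v - u)^2 / v \<le> (v - u) / v" using assms
      by (intro divide_right_mono) (auto simp: power2_eq_square)
    also have "\<dots> = 1 - u / v" using assms by (simp add: field_simps)
    finally show ?thesis using False assms lnuv by (simp add: ogd_kap_def)
  qed
qed

lemma sq_le_self: fixes x :: real assumes "0 \<le> x" "x \<le> 1" shows "x^2 \<le> x"
proof -
  have "x * x \<le> 1 * x" using assms by (intro mult_right_mono) auto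
  thus ?thesis by (simp add: power2_eq_square)
qed

lemma t1: fixes \<alpha> \<epsilon> L w :: real assumes "0<\<alpha>" "0<\<epsilon>" "0<L" "0<w"
  shows "2 * (sqrt 2 * \<epsilon> / (L * w)) * (\<alpha> / 4 * (sqrt 2 * L / (\<alpha> * \<epsilon>) * w)) = 1"
proof -
  have "2 * (sqrt 2 * \<epsilon> / (L * w)) * (\<alpha> / 4 * (sqrt 2 * L / (\<alpha> * \<epsilon>) * w))
      = (sqrt 2 * sqrt 2) * ((\<epsilon> * \<alpha> * L * w) / (\<epsilon> * \<alpha> * L * w)) / 2"
    by (simp add: mult_ac)
  also have "\<dots> = 1" using assms by simp
  finally show ?thesis .
qed

lemma ogd_core:
  fixes \<alpha> \<epsilon> L u v r :: real
  assumes pos: "0 < \<alpha>" "0 < \<epsilon>" "0 < L" and uv: "0 \<le> u" "u \<le> v" "v - u \<le> 1" and r0: "0 \<le> r"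
  defines "\<eta> \<equiv> Rprime \<alpha> \<epsilon> L v" and "lam \<equiv> 2 * Rprime \<alpha> \<epsilon> L v * ogd_psi \<alpha> \<epsilon> L v"
  shows "0 < \<eta>" "0 \<le> lam" "lam \<le> 1"
    "(ogd_psi \<alpha> \<epsilon> L v - ogd_psi \<alpha> \<epsilon> L u) * r^2 + (1 - lam) * (v - u) * L * r
       - \<alpha> * (v - u) / 2 * (max (r - \<epsilon>) 0)^2 + lam * \<eta> * (v - u)^2 * L^2 / 2
     \<le> ogd_FF \<alpha> \<epsilon> L v - ogd_FF \<alpha> \<epsilon> L u"
proof -
  define a where "a = sqrt 2 * L / (\<alpha> * \<epsilon>)"
  define g where "g = v - u"
  define D where "D = ogd_psi \<alpha> \<epsilon> L v - ogd_psi \<alpha> \<epsilon> L u"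
  have a0: "0 < a" using pos by (simp add: a_def)
  have s2: "sqrt 2 * sqrt 2 = 2" by simp
  have s2p: "0 < sqrt 2" by simp
  have g0: "0 \<le> g" and g1: "g \<le> 1" using uv by (auto simp: g_def)
  note mp = ogd_mm_props[OF a0 uv(1,2)]
  have psiv: "ogd_psi \<alpha> \<epsilon> L v = \<alpha> / 4 * ogd_mm a v" and psiu: "ogd_psi \<alpha> \<epsilon> L u = \<alpha> / 4 * ogd_mm a u"
    by (simp_all add: ogd_psi_def a_def)
  have D4: "4 * D / \<alpha> = ogd_mm a v - ogd_mm a u" using pos by (simp add: D_def psiv psiu right_diff_distrib[symmetric])
  have Df: "D = \<alpha> / 4 * (ogd_mm a v - ogd_mm a u)" by (simp add: D_def psiv psiu right_diff_distrib)
  have D0: "0 \<le> D" using mp pos unfolding Df by simp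
  have "\<alpha> / 4 * (ogd_mm a v - ogd_mm a u) \<le> \<alpha> / 4 * (v - u)" using mp pos by (intro mult_left_mono) auto
  hence Dg: "D \<le> \<alpha> * g / 4" unfolding Df g_def by simp
  have sv: "0 \<le> sqrt v" "sqrt u \<le> sqrt v" using uv by auto
  have Rp: "Rprime \<alpha> \<epsilon> L v = (if v \<le> 1 then 2 / \<alpha> else if v \<le> a^2 then 2 / (\<alpha> * v)
      else sqrt 2 * \<epsilon> / (L * sqrt v))" by (simp add: Rprime_def a_def)
  have FFd: "ogd_FF \<alpha> \<epsilon> L v - ogd_FF \<alpha> \<epsilon> L u = 2 * \<epsilon>^2 * D + 3 / sqrt 2 * \<epsilon> * L * (sqrt v - sqrt u)
      + L^2 / \<alpha> * (ogd_kap v - ogd_kap u)"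
    by (simp add: ogd_FF_def D_def algebra_simps diff_divide_distrib)
  have c32: "2 \<le> 3 / sqrt 2"
  proof -
    have "2 * sqrt 2 \<le> 3" using real_sqrt_le_iff[of 2 "9/4"] by (simp add: real_sqrt_divide)
    thus ?thesis using s2p by (simp add: field_simps)
  qed
  have kmono: "0 \<le> ogd_kap v - ogd_kap u" using ogd_kap_mono[OF uv(1,2)] by simp
  have P: "D * r^2 + (1 - lam) * g * L * r - \<alpha> * g / 2 * (max (r - \<epsilon>) 0)^2
     \<le> 2 * \<epsilon>^2 * D + (1 - lam) * L * \<epsilon> * (g + 4 * D / \<alpha>) + (1 - lam)^2 * L^2 * (g + 4 * D / \<alpha>) / (2 * \<alpha>)"
    if "lam \<le> 1" using Pbound[OF pos that D0 Dg r0] .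
  have main: "0 < \<eta> \<and> 0 \<le> lam \<and> lam \<le> 1 \<and>
    D * r^2 + (1 - lam) * g * L * r - \<alpha> * g / 2 * (max (r - \<epsilon>) 0)^2 + lam * \<eta> * g^2 * L^2 / 2
     \<le> ogd_FF \<alpha> \<epsilon> L v - ogd_FF \<alpha> \<epsilon> L u"
  proof (cases "v \<le> 1")
    case True
    have eta: "\<eta> = 2 / \<alpha>" using True by (simp add: \<eta>_def Rp)
    have lamv: "lam = ogd_mm a v" using True pos by (simp add: lam_def Rp psiv)
    have l0: "0 \<le> lam" and l1: "lam \<le> 1" using mp True uv lamv by auto
    have S: "(1 - lam) * (g + 4 * D / \<alpha>) \<le> 2 * (sqrt v - sqrt u)"
      using S1[OF a0 uv(1,2) True] by (simp add: lamv D4 g_def add_diff_eq)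
    have S': "(1 - lam) * L * \<epsilon> * (g + 4 * D / \<alpha>) \<le> 3 / sqrt 2 * \<epsilon> * L * (sqrt v - sqrt u)"
    proof -
      have "(1 - lam) * (g + 4 * D / \<alpha>) * (\<epsilon> * L) \<le> (2 * (sqrt v - sqrt u)) * (\<epsilon> * L)"
        using S pos by (intro mult_right_mono) auto
      also have "\<dots> \<le> (3 / sqrt 2 * (sqrt v - sqrt u)) * (\<epsilon> * L)"
        using c32 sv pos by (intro mult_right_mono) auto
      finally have h: "(1 - lam) * (g + 4 * D / \<alpha>) * (\<epsilon> * L) \<le> 3 / sqrt 2 * (sqrt v - sqrt u) * (\<epsilon> * L)" .
      have e1: "(1 - lam) * L * \<epsilon> * (g + 4 * D / \<alpha>) = (1 - lam) * (g + 4 * D / \<alpha>) * (\<epsilon> * L)" by (simp only: mult_ac)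
      have e2: "3 / sqrt 2 * \<epsilon> * L * (sqrt v - sqrt u) = 3 / sqrt 2 * (sqrt v - sqrt u) * (\<epsilon> * L)" by (simp only: mult_ac)
      show ?thesis unfolding e1 e2 by (rule h)
    qed
    have w: "g + 4 * D / \<alpha> \<le> 2 * g" using D4 mp by (simp add: g_def)
    have w0: "0 \<le> g + 4 * D / \<alpha>" using D0 pos g0 by simp
    have Lq: "(1 - lam)^2 * (g + 4 * D / \<alpha>) / 2 + lam * g^2 \<le> g"
    proof -
      have A: "(1 - lam)^2 * (g + 4 * D / \<alpha>) \<le> (1 - lam)^2 * (2 * g)" using w by (intro mult_left_mono) auto
      have A': "(1 - lam)^2 * (g + 4 * D / \<alpha>) / 2 \<le> (1 - lam)^2 * g" using A by simp
      have "(1 - lam)^2 \<le> 1 - lam" using l0 l1 sq_le_self[of "1 - lam"] by simp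
      hence B: "(1 - lam)^2 * g \<le> (1 - lam) * g" using g0 by (intro mult_right_mono)
      have C: "lam * g^2 \<le> lam * g" using g0 g1 l0 sq_le_self[OF g0 g1]
        by (intro mult_left_mono) auto
      have "(1 - lam)^2 * (g + 4 * D / \<alpha>) / 2 + lam * g^2 \<le> (1 - lam)^2 * g + lam * g"
        using A' C by (rule add_mono)
      also have "\<dots> \<le> (1 - lam) * g + lam * g" using B by (rule add_right_mono)
      also have "\<dots> = g" by (simp add: algebra_simps)
      finally show ?thesis .
    qed
    have kd: "ogd_kap v - ogd_kap u = g" using True uv by (simp add: ogd_kap_def g_def)
    have Lq': "(1 - lam)^2 * L^2 * (g + 4 * D / \<alpha>) / (2 * \<alpha>) + lam * \<eta> * g^2 * L^2 / 2 \<le> L^2 / \<alpha> * (ogd_kap v - ogd_kap u)"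
    proof -
      have "(1 - lam)^2 * L^2 * (g + 4 * D / \<alpha>) / (2 * \<alpha>) + lam * \<eta> * g^2 * L^2 / 2
          = L^2 / \<alpha> * ((1 - lam)^2 * (g + 4 * D / \<alpha>) / 2 + lam * g^2)" using pos by (simp add: eta field_simps)
      also have "\<dots> \<le> L^2 / \<alpha> * g" using Lq pos by (intro mult_left_mono) auto
      finally show ?thesis using kd by simp
    qed
    have "0 < \<eta>" using eta pos by simp
    thus ?thesis using P[OF l1] S' Lq' FFd l0 l1 by linarith
  next
    case False
    note v1 = False
    have lam1: "lam = 1" and eta0: "0 < \<eta>" and rest: "lam * \<eta> * g^2 * L^2 / 2 \<le> 3 / sqrt 2 * \<epsilon> * L * (sqrt v - sqrt u) + L^2 / \<alpha> * (ogd_kap v - ogd_kap u)"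
    proof -
      have "lam = 1 \<and> 0 < \<eta> \<and> lam * \<eta> * g^2 * L^2 / 2 \<le> 3 / sqrt 2 * \<epsilon> * L * (sqrt v - sqrt u) + L^2 / \<alpha> * (ogd_kap v - ogd_kap u)"
      proof (cases "v \<le> a^2")
        case True
        have eta: "\<eta> = 2 / (\<alpha> * v)" using True v1 by (simp add: \<eta>_def Rp)
        have "sqrt v \<le> a" using True a0 by (metis abs_of_pos real_sqrt_abs real_sqrt_le_mono)
        hence "sqrt v * sqrt v \<le> a * sqrt v" using sv by (intro mult_right_mono) auto
        hence "ogd_mm a v = v" using uv by (simp add: ogd_mm_def min_def)
        hence lamv: "lam = 1" using True v1 pos by (simp add: lam_def Rp psiv)
        have "lam * \<eta> * g^2 * L^2 / 2 = L^2 / \<alpha> * (g^2 / v)" using pos v1 by (simp add: lamv eta field_simps)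
        also have "\<dots> \<le> L^2 / \<alpha> * (ogd_kap v - ogd_kap u)"
          using ogd_kap_reg2[OF uv] v1 pos by (intro mult_left_mono) (auto simp: g_def)
        finally have "lam * \<eta> * g^2 * L^2 / 2 \<le> 3 / sqrt 2 * \<epsilon> * L * (sqrt v - sqrt u) + L^2 / \<alpha> * (ogd_kap v - ogd_kap u)"
          using sv pos by (smt (verit) divide_nonneg_nonneg mult_nonneg_nonneg s2p)
        thus ?thesis using lamv eta pos v1 by simp
      next
        case False
        have eta: "\<eta> = sqrt 2 * \<epsilon> / (L * sqrt v)" using False v1 by (simp add: \<eta>_def Rp)
        have vpos: "0 < sqrt v" using v1 by simp
        have "a < sqrt v" using False a0 by (metis abs_of_pos not_le real_sqrt_abs real_sqrt_le_mono real_sqrt_less_iff)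
        hence "a * sqrt v \<le> sqrt v * sqrt v" using sv by (intro mult_right_mono) auto
        hence mv: "ogd_mm a v = a * sqrt v" using uv by (simp add: ogd_mm_def min_def)
        have lamv: "lam = 1"
        proof -
          have "lam = 2 * \<eta> * (\<alpha> / 4 * ogd_mm a v)" unfolding lam_def \<eta>_def[symmetric] psiv ..
          also have "\<dots> = 2 * (sqrt 2 * \<epsilon> / (L * sqrt v)) * (\<alpha> / 4 * (sqrt 2 * L / (\<alpha> * \<epsilon>) * sqrt v))"
            unfolding eta mv by (simp add: a_def)
          finally have "lam = 2 * (sqrt 2 * \<epsilon> / (L * sqrt v)) * (\<alpha> / 4 * (sqrt 2 * L / (\<alpha> * \<epsilon>) * sqrt v))" .
          also have "\<dots> = 1" using t1[OF pos vpos] .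
          finally show ?thesis .
        qed
        have "lam * \<eta> * g^2 * L^2 / 2 = sqrt 2 * \<epsilon> * L * (g^2 / (2 * sqrt v))"
          using pos vpos by (simp add: lamv eta power2_eq_square mult_ac)
        also have "\<dots> \<le> sqrt 2 * \<epsilon> * L * (sqrt v - sqrt u)"
        proof (intro mult_left_mono)
          have "g = (sqrt v - sqrt u) * (sqrt v + sqrt u)" using uv by (simp add: g_def algebra_simps)
          hence "g \<le> (sqrt v - sqrt u) * (2 * sqrt v)" using sv by (simp add: mult_left_mono)
          moreover have "g^2 \<le> g" using sq_le_self[OF g0 g1] .
          ultimately have "g^2 \<le> (sqrt v - sqrt u) * (2 * sqrt v)" by linarith
          thus "g^2 / (2 * sqrt v) \<le> sqrt v - sqrt u" using vpos by (simp add: field_simps)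
        qed (use pos in auto)
        also have "\<dots> \<le> 3 / sqrt 2 * \<epsilon> * L * (sqrt v - sqrt u)"
        proof -
          have "sqrt 2 \<le> 3 / sqrt 2" using s2 s2p by (simp add: field_simps)
          thus ?thesis using sv pos by (intro mult_right_mono) auto
        qed
        finally have ch: "lam * \<eta> * g^2 * L^2 / 2 \<le> 3 / sqrt 2 * \<epsilon> * L * (sqrt v - sqrt u)" .
        have kn: "0 \<le> L^2 / \<alpha> * (ogd_kap v - ogd_kap u)" using kmono pos by simp
        have "0 < \<eta>" using eta pos vpos by simp
        thus ?thesis using lamv ch kn by linarith
      qed
      thus "lam = 1" "0 < \<eta>" "lam * \<eta> * g^2 * L^2 / 2 \<le> 3 / sqrt 2 * \<epsilon> * L * (sqrt v - sqrt u) + L^2 / \<alpha> * (ogd_kap v - ogd_kap u)"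
        by auto
    qed
    have "D * r^2 + (1 - lam) * g * L * r - \<alpha> * g / 2 * (max (r - \<epsilon>) 0)^2 \<le> 2 * \<epsilon>^2 * D"
      using P lam1 by simp
    thus ?thesis using rest FFd lam1 eta0 by linarith
  qed
  thus "0 < \<eta>" "0 \<le> lam" "lam \<le> 1"
    "(ogd_psi \<alpha> \<epsilon> L v - ogd_psi \<alpha> \<epsilon> L u) * r^2 + (1 - lam) * (v - u) * L * r
       - \<alpha> * (v - u) / 2 * (max (r - \<epsilon>) 0)^2 + lam * \<eta> * (v - u)^2 * L^2 / 2
     \<le> ogd_FF \<alpha> \<epsilon> L v - ogd_FF \<alpha> \<epsilon> L u" by (auto simp: D_def g_def)
qed


lemma ogd_FF_0: "ogd_FF \<alpha> \<epsilon> L 0 = 0"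
  by (simp add: ogd_FF_def ogd_psi_def ogd_mm_def ogd_kap_def)

lemma ogd_FF_le:
  fixes \<alpha> \<epsilon> L z :: real
  assumes pos: "0 < \<alpha>" "0 < \<epsilon>" "0 < L" and z: "0 \<le> z"
  shows "ogd_FF \<alpha> \<epsilon> L z \<le> 2 * sqrt 2 * \<epsilon> * L * sqrt z + L^2 / \<alpha> * (ln (z + 1) + 1)"
proof -
  have m: "ogd_mm (sqrt 2 * L / (\<alpha> * \<epsilon>)) z \<le> sqrt 2 * L / (\<alpha> * \<epsilon>) * sqrt z"
    by (simp add: ogd_mm_def)
  have "2 * \<epsilon>^2 * ogd_psi \<alpha> \<epsilon> L z \<le> 2 * \<epsilon>^2 * (\<alpha> / 4 * (sqrt 2 * L / (\<alpha> * \<epsilon>) * sqrt z))"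
    unfolding ogd_psi_def using m pos by (intro mult_left_mono) auto
  also have "\<dots> = sqrt 2 / 2 * \<epsilon> * L * sqrt z" using pos by (simp add: field_simps power2_eq_square)
  finally have p: "2 * \<epsilon>^2 * ogd_psi \<alpha> \<epsilon> L z \<le> sqrt 2 / 2 * \<epsilon> * L * sqrt z" .
  have t: "3 / sqrt 2 = 3 * sqrt 2 / 2"
    by (simp add: field_simps)
  have "sqrt 2 / 2 * \<epsilon> * L * sqrt z + 3 / sqrt 2 * \<epsilon> * L * sqrt z = 2 * sqrt 2 * \<epsilon> * L * sqrt z"
    unfolding t by (simp add: algebra_simps)
  moreover have "ogd_kap z \<le> ln (z + 1) + 1"
  proof (cases "z \<le> 1")
    case True
    have "0 \<le> ln (z + 1)" using z by simp
    thus ?thesis using True by (simp add: ogd_kap_def)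
  next
    case False
    have "ln z \<le> ln (z + 1)" using False by simp
    thus ?thesis using False by (simp add: ogd_kap_def)
  qed
  hence k: "L^2 / \<alpha> * ogd_kap z \<le> L^2 / \<alpha> * (ln (z + 1) + 1)" using pos by (intro mult_left_mono) auto
  ultimately have e: "sqrt 2 / 2 * \<epsilon> * L * sqrt z + 3 / sqrt 2 * \<epsilon> * L * sqrt z = 2 * sqrt 2 * \<epsilon> * L * sqrt z" by simp
  have "ogd_FF \<alpha> \<epsilon> L z \<le> sqrt 2 / 2 * \<epsilon> * L * sqrt z + 3 / sqrt 2 * \<epsilon> * L * sqrt z + L^2 / \<alpha> * (ln (z + 1) + 1)"
    unfolding ogd_FF_def using p k by (intro add_mono) auto
  thus ?thesis unfolding e .
qed

lemma norm_sq_step: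
  fixes a b :: "'a::real_inner"
  shows "(norm (a - c *\<^sub>R b))^2 = (norm a)^2 - 2 * c * (b \<bullet> a) + c^2 * (norm b)^2"
  unfolding power2_norm_eq_inner
  by (simp add: inner_diff_left inner_diff_right inner_commute algebra_simps power2_eq_square)

lemma proj_le:
  fixes K :: "'a::euclidean_space set"
  assumes "closed K" "convex K" "z \<in> K"
  shows "norm (closest_point K y - z) \<le> norm (y - z)"
proof -
  have "dist (closest_point K y) (closest_point K z) \<le> dist y z"
    using closest_point_lipschitz[OF assms(2,1)] assms(3) by blast
  thus ?thesis using closest_point_self[OF assms(3)] by (simp add: dist_norm)
qed

lemma round_bound:
  fixes \<alpha> \<epsilon> L u v lt lstar gt w N r D0 D1 :: real
  assumes pos: "0 < \<alpha>" "0 < \<epsilon>" "0 < L" and uv: "0 \<le> u" "v = u + gt" "0 \<le> gt" "gt \<le> 1"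
    and r0: "0 \<le> r" and D0: "D0 = r^2"
    and nsc: "lt - lstar \<le> w - \<alpha> / 2 * (max (r - \<epsilon>) 0)^2"
    and proj: "D1 \<le> D0 - 2 * (Rprime \<alpha> \<epsilon> L v * gt) * w + (Rprime \<alpha> \<epsilon> L v * gt)^2 * N^2"
    and cs: "w \<le> L * r" and N: "0 \<le> N" "N \<le> L"
  shows "gt * (lt - lstar) + ogd_psi \<alpha> \<epsilon> L v * D1 - ogd_psi \<alpha> \<epsilon> L u * D0
     \<le> ogd_FF \<alpha> \<epsilon> L v - ogd_FF \<alpha> \<epsilon> L u"
proof -
  define \<eta> where "\<eta> = Rprime \<alpha> \<epsilon> L v"
  define lam where "lam = 2 * Rprime \<alpha> \<epsilon> L v * ogd_psi \<alpha> \<epsilon> L v"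
  define pv where "pv = ogd_psi \<alpha> \<epsilon> L v"
  define pu where "pu = ogd_psi \<alpha> \<epsilon> L u"
  define M where "M = (max (r - \<epsilon>) 0)^2"
  have uv': "u \<le> v" "v - u \<le> 1" using uv by auto
  note C = ogd_core[OF pos uv(1) uv' r0]
  have eta0: "0 < \<eta>" using C(1) by (simp add: \<eta>_def)
  have l0: "0 \<le> lam" and l1: "lam \<le> 1" using C(2,3) by (simp_all add: lam_def)
  have core: "(pv - pu) * r^2 + (1 - lam) * gt * L * r - \<alpha> * gt / 2 * M + lam * \<eta> * gt^2 * L^2 / 2
     \<le> ogd_FF \<alpha> \<epsilon> L v - ogd_FF \<alpha> \<epsilon> L u"
    using C(4) uv by (simp add: \<eta>_def lam_def pv_def pu_def M_def)
  have pv0: "0 \<le> pv" using eta0 l0 by (simp add: lam_def pv_def \<eta>_def zero_le_mult_iff)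
  have A: "gt * (lt - lstar) \<le> gt * (w - \<alpha> / 2 * M)" using nsc uv by (intro mult_left_mono) (auto simp: M_def)
  have B: "pv * D1 \<le> pv * (D0 - 2 * (\<eta> * gt) * w + (\<eta> * gt)^2 * N^2)"
    using proj pv0 by (intro mult_left_mono) (auto simp: \<eta>_def)
  have Beq: "pv * (D0 - 2 * (\<eta> * gt) * w + (\<eta> * gt)^2 * N^2) = pv * D0 - lam * gt * w + lam * \<eta> * gt^2 * N^2 / 2"
    by (simp add: lam_def \<eta>_def pv_def algebra_simps power2_eq_square)
  have Cw: "(1 - lam) * gt * w \<le> (1 - lam) * gt * (L * r)"
    using cs l1 uv by (intro mult_left_mono) auto
  have NL: "N^2 \<le> L^2" using N by (intro power_mono) auto
  have Dn: "lam * \<eta> * gt^2 * N^2 / 2 \<le> lam * \<eta> * gt^2 * L^2 / 2"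
  proof -
    have "0 \<le> lam * \<eta> * gt^2" using l0 eta0 by simp
    hence "lam * \<eta> * gt^2 * N^2 \<le> lam * \<eta> * gt^2 * L^2" using NL by (intro mult_left_mono)
    thus ?thesis by simp
  qed
  have e1: "gt * (w - \<alpha> / 2 * M) = gt * w - \<alpha> * gt / 2 * M" by (simp add: algebra_simps)
  have e2: "(1 - lam) * gt * w = gt * w - lam * gt * w" by (simp add: algebra_simps)
  have e3: "(1 - lam) * gt * (L * r) = (1 - lam) * gt * L * r" by (simp add: mult_ac)
  have e4: "(pv - pu) * r^2 = pv * D0 - pu * D0" using D0 by (simp add: algebra_simps)
  show ?thesis
    using A B Beq Cw Dn core e1 e2 e3 e4 unfolding pv_def[symmetric] pu_def[symmetric]
    by linarith
qed

theorem theorem13: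
  fixes K :: "'a::euclidean_space set"
    and l :: "nat \<Rightarrow> 'a \<Rightarrow> real" and grad :: "nat \<Rightarrow> 'a"
    and g :: "nat \<Rightarrow> real" and x :: "nat \<Rightarrow> 'a"
    and \<alpha> \<epsilon> L :: real and T :: nat and xstar :: 'a
  assumes "closed K" and "convex K"
    and "\<alpha> > 0" and "\<epsilon> > 0" and "L > 0"
    and "\<And>t. 1 \<le> t \<Longrightarrow> t \<le> T \<Longrightarrow> nearly_strongly_convex \<alpha> \<epsilon> K (l t)"
    and "\<And>t. 1 \<le> t \<Longrightarrow> t \<le> T \<Longrightarrow> g t \<in> {0..1}"
    and "x 1 \<in> K"
    and "\<And>t. 1 \<le> t \<Longrightarrow> t \<le> T \<Longrightarrow> subgradient_at K (l t) (x t) (grad t)"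
    and "\<And>t. 1 \<le> t \<Longrightarrow> t \<le> T \<Longrightarrow> norm (grad t) \<le> L"
    and "\<And>t. 1 \<le> t \<Longrightarrow> t \<le> T \<Longrightarrow>
           x (Suc t) = closest_point K
             (x t - (Rprime \<alpha> \<epsilon> L (\<Sum>s=1..t. g s) * g t) *\<^sub>R grad t)"
    and "xstar \<in> K"
  shows "(\<Sum>t=1..T. g t * (l t (x t) - l t xstar))
         \<le> 2 * sqrt 2 * \<epsilon> * L * sqrt (\<Sum>s=1..T. g s)
           + L\<^sup>2 / \<alpha> * (ln ((\<Sum>s=1..T. g s) + 1) + 1)"
proof -
  note clK = assms(1) and cvK = assms(2) and pos = assms(3,4,5)
  note nsc = assms(6) and grng = assms(7) and x1 = assms(8) and sg = assms(9)
    and gL = assms(10) and upd = assms(11) and xs = assms(12)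
  define G where "G n = (\<Sum>s=1..n. g s)" for n
  define D where "D n = (norm (x n - xstar))^2" for n
  define W where "W n = ogd_FF \<alpha> \<epsilon> L (G n) - ogd_psi \<alpha> \<epsilon> L (G n) * D (Suc n)" for n
  define R where "R t = g t * (l t (x t) - l t xstar)" for t
  have GS: "G (Suc n) = G n + g (Suc n)" for n by (simp add: G_def)
  have G0: "0 \<le> G n" if "n \<le> T" for n
    unfolding G_def using that grng by (intro sum_nonneg) auto
  have Kne: "K \<noteq> {}" using x1 by auto
  have xin: "x n \<in> K" if "1 \<le> n" "n \<le> Suc T" for n
    using that
  proof (induction n)
    case 0 thus ?case by simp
  next
    case (Suc n)
    show ?case
    proof (cases "n = 0")
      case True thus ?thesis using x1 by simp
    next
      case False
      hence "1 \<le> n" "n \<le> T" using Suc by auto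
      thus ?thesis using upd closest_point_in_set[OF clK Kne] by simp
    qed
  qed
  have step: "R (Suc n) + ogd_psi \<alpha> \<epsilon> L (G (Suc n)) * D (Suc (Suc n)) - ogd_psi \<alpha> \<epsilon> L (G n) * D (Suc n)
      \<le> ogd_FF \<alpha> \<epsilon> L (G (Suc n)) - ogd_FF \<alpha> \<epsilon> L (G n)" if nT: "n < T" for n
  proof -
    define t where "t = Suc n"
    have t1: "1 \<le> t" "t \<le> T" using nT by (auto simp: t_def)
    have xt: "x t \<in> K" using xin t1 by simp
    define w where "w = grad t \<bullet> (x t - xstar)"
    define r where "r = norm (x t - xstar)"
    define c where "c = Rprime \<alpha> \<epsilon> L (G t) * g t"
    have gt: "0 \<le> g t" "g t \<le> 1" using grng t1 by auto
    have nscl: "l t xstar - l t (x t) - grad t \<bullet> (xstar - x t) \<ge> \<alpha> / 2 * (max (norm (xstar - x t) - \<epsilon>) 0)^2"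
      using nsc[OF t1] sg[OF t1] xt xs unfolding nearly_strongly_convex_def by blast
    have nr: "norm (xstar - x t) = r" by (simp add: r_def norm_minus_commute)
    have iw: "grad t \<bullet> (xstar - x t) = - w" by (simp add: w_def inner_diff_right)
    have N1: "l t (x t) - l t xstar \<le> w - \<alpha> / 2 * (max (r - \<epsilon>) 0)^2"
      using nscl unfolding nr iw by linarith
    have xS: "x (Suc t) = closest_point K (x t - c *\<^sub>R grad t)"
      using upd[OF t1] by (simp add: c_def G_def)
    have "norm (x (Suc t) - xstar) \<le> norm ((x t - xstar) - c *\<^sub>R grad t)"
      unfolding xS using proj_le[OF clK cvK xs, of "x t - c *\<^sub>R grad t"] by (simp add: algebra_simps)
    hence "(norm (x (Suc t) - xstar))^2 \<le> (norm ((x t - xstar) - c *\<^sub>R grad t))^2"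
      by (intro power_mono) auto
    hence P: "D (Suc t) \<le> D t - 2 * c * w + c^2 * (norm (grad t))^2"
      unfolding D_def norm_sq_step by (simp add: w_def)
    have cs: "w \<le> L * r"
    proof -
      have "w \<le> norm (grad t) * norm (x t - xstar)" unfolding w_def by (rule norm_cauchy_schwarz)
      also have "\<dots> \<le> L * r" unfolding r_def using gL[OF t1] by (intro mult_right_mono) auto
      finally show ?thesis .
    qed
    have "g t * (l t (x t) - l t xstar) + ogd_psi \<alpha> \<epsilon> L (G t) * D (Suc t) - ogd_psi \<alpha> \<epsilon> L (G n) * D t
        \<le> ogd_FF \<alpha> \<epsilon> L (G t) - ogd_FF \<alpha> \<epsilon> L (G n)"
    proof (rule round_bound[OF pos, where w = w and r = r and N = "norm (grad t)"])
      show "0 \<le> G n" using G0 nT by simp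
      show "G t = G n + g t" by (simp add: t_def GS)
      show "0 \<le> g t" "g t \<le> 1" using gt by auto
      show "0 \<le> r" by (simp add: r_def)
      show "D t = r^2" by (simp add: D_def r_def)
      show "l t (x t) - l t xstar \<le> w - \<alpha> / 2 * (max (r - \<epsilon>) 0)^2" by (rule N1)
      show "D (Suc t) \<le> D t - 2 * (Rprime \<alpha> \<epsilon> L (G t) * g t) * w + (Rprime \<alpha> \<epsilon> L (G t) * g t)^2 * (norm (grad t))^2"
        using P by (simp add: c_def)
      show "w \<le> L * r" by (rule cs)
      show "0 \<le> norm (grad t)" by simp
      show "norm (grad t) \<le> L" using gL[OF t1] .
    qed
    thus ?thesis by (simp add: t_def R_def)
  qed
  have tel: "(\<Sum>t=1..n. R t) \<le> W n" if "n \<le> T" for n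
    using that
  proof (induction n)
    case 0
    thus ?case by (simp add: W_def G_def ogd_FF_0 ogd_psi_def ogd_mm_def)
  next
    case (Suc n)
    hence ih: "(\<Sum>t=1..n. R t) \<le> W n" by simp
    have "(\<Sum>t=1..Suc n. R t) = (\<Sum>t=1..n. R t) + R (Suc n)" by simp
    also have "\<dots> \<le> W (Suc n)" using ih step[of n] Suc.prems unfolding W_def by simp
    finally show ?case .
  qed
  have "(\<Sum>t=1..T. R t) \<le> W T" using tel by simp
  also have "\<dots> \<le> ogd_FF \<alpha> \<epsilon> L (G T)"
  proof -
    have "0 \<le> ogd_psi \<alpha> \<epsilon> L (G T)"
      using ogd_mm_props(1)[of "sqrt 2 * L / (\<alpha> * \<epsilon>)" "G T" "G T"] G0 pos
      by (simp add: ogd_psi_def)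
    moreover have "0 \<le> D (Suc T)" by (simp add: D_def)
    ultimately show ?thesis by (simp add: W_def)
  qed
  also have "\<dots> \<le> 2 * sqrt 2 * \<epsilon> * L * sqrt (G T) + L^2 / \<alpha> * (ln (G T + 1) + 1)"
    using ogd_FF_le[OF pos G0[of T]] by simp
  finally show ?thesis by (simp add: R_def G_def)
qed

end
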